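(* Let $N\ge2$ be even. For every $s\in(1,m^*_N]$ there exists $\theta_s\in\mathcal G$ with $\langle M_N(\theta_s)\rangle=s$.
   Context: $\mathcal G=(\pi/4,\pi/2)\cup(\pi/2,3\pi/4)\cup(5\pi/4,3\pi/2)\cup(3\pi/2,7\pi/4)$. For $\bm x\in\{0,1\}^N$ let $|\bm x|=\sum_kx_k$ and $c_{\bm x}=\cos\big[\frac\pi2\big(\frac{N-1}2-|\bm x|\big)\big]$. The MABK value of the strategy with state $(|0\rangle^{\otimes N}+i|1\rangle^{\otimes N})/\sqrt2$ and observables $A^{(k)}_0=\sigma_X$, $A^{(k)}_1=\cos\theta\sigma_X+\sin\theta\sigma_Y$ for all $k$ is $\langle M_N(\theta)\rangle:=2^{(1-N)/2}\sum_{\bm x\in\{0,1\}^N}c_{\bm x}\sin(|\bm x|\theta)$ (since the full correlator of this strategy at input $\bm x$ is $\sin(|\bm x|\theta)$); equivalently $\langle M_N(\theta)\rangle=2^{\frac{N-1}2}\big(\cos^N(\theta/2+\pi/4)\sin(N\theta/2+\pi/4)+\cos^N(\theta/2-\pi/4)\sin(N\theta/2-\pi/4)\big)$. $m^*_N:=\langle M_N(\theta^*_N)\rangle$ with $\theta^*_N=2\pi t_N/(N+1)$, where $t_N=N/4+1/2,\ N/4,\ 3N/4+1/2,\ 3N/4+1$ according as $N\equiv2,4,6,0\pmod 8$. *)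

theory Defs
  imports "HOL-Analysis.Analysis"
begin

definition G_set :: "real set" where
  "G_set = {pi/4<..<pi/2} \<union> {pi/2<..<3*pi/4} \<union> {5*pi/4<..<3*pi/2} \<union> {3*pi/2<..<7*pi/4}"

definition bitstrings :: "nat \<Rightarrow> (nat \<Rightarrow> nat) set" where
  "bitstrings N = {..<N} \<rightarrow>\<^sub>E {0, 1}"

definition weight :: "nat \<Rightarrow> (nat \<Rightarrow> nat) \<Rightarrow> nat" where
  "weight N x = (\<Sum>k<N. x k)"

definition c_coef :: "nat \<Rightarrow> (nat \<Rightarrow> nat) \<Rightarrow> real" where
  "c_coef N x = cos (pi / 2 * ((real N - 1) / 2 - real (weight N x)))"

definition MABK :: "nat \<Rightarrow> real \<Rightarrow> real" where
  "MABK N \<theta> = 2 powr ((1 - real N) / 2) *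
     (\<Sum>x\<in>bitstrings N. c_coef N x * sin (real (weight N x) * \<theta>))"

definition t_N :: "nat \<Rightarrow> real" where
  "t_N N = (if N mod 8 = 2 then real N / 4 + 1/2
            else if N mod 8 = 4 then real N / 4
            else if N mod 8 = 6 then 3 * real N / 4 + 1/2
            else 3 * real N / 4 + 1)"

definition theta_star :: "nat \<Rightarrow> real" where
  "theta_star N = 2 * pi * t_N N / (real N + 1)"

definition m_star :: "nat \<Rightarrow> real" where
  "m_star N = MABK N (theta_star N)"

end

theory Submission
  imports Defs
begin

lemma genfun: "(\<Sum>x\<in>bitstrings N. (z::complex) ^ weight N x) = (1 + z) ^ N"
proof -
  have "(\<Sum>x\<in>bitstrings N. z ^ weight N x) = (\<Sum>x\<in>bitstrings N. \<Prod>k<N. z ^ x k)"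
    unfolding weight_def by (simp add: power_sum)
  also have "\<dots> = (\<Prod>k<N. \<Sum>v\<in>{0,1::nat}. z ^ v)"
    unfolding bitstrings_def by (rule prod_sum_PiE[symmetric]) auto
  also have "\<dots> = (1+z)^N" by (simp add: add.commute)
  finally show ?thesis .
qed

lemma cossin: "cos (A::real) * sin B = (sin (B + A) + sin (B - A)) / 2"
  by (simp add: sin_add sin_diff)

lemma one_plus_cis: "1 + cis \<phi> = complex_of_real (2 * cos (\<phi>/2)) * cis (\<phi>/2)"
proof -
  have h: "cis (\<phi>/2) + cis (-(\<phi>/2)) = complex_of_real (2 * cos (\<phi>/2))"
    by (simp add: cis.ctr complex_eq_iff)
  have "complex_of_real (2 * cos (\<phi>/2)) * cis (\<phi>/2) = (cis (\<phi>/2) + cis (-(\<phi>/2))) * cis (\<phi>/2)"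
    by (simp only: h)
  also have "\<dots> = cis (\<phi>/2) * cis (\<phi>/2) + cis (-(\<phi>/2)) * cis (\<phi>/2)" by (simp only: distrib_right)
  also have "\<dots> = cis \<phi> + 1" by (simp add: cis_mult)
  finally show ?thesis by simp
qed


lemma pw: "(1 + cis \<phi>)^N = complex_of_real ((2*cos(\<phi>/2))^N) * cis (N*(\<phi>/2))"
  by (simp add: one_plus_cis power_mult_distrib Complex.DeMoivre)

lemma imcis: "Im (cis a * (complex_of_real r * cis b)) = r * sin (a + b)"
  by (simp add: sin_add algebra_simps)

lemma imadd: "Im (u + v) = Im u + Im v" by simp

lemma closed_form:
  "MABK N \<theta> = 2 powr ((real N - 1)/2) *
     (cos (\<theta>/2 + pi/4) ^ N * sin (N*\<theta>/2 + pi/4) + cos (\<theta>/2 - pi/4) ^ N * sin (N*\<theta>/2 - pi/4))"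
proof -
  define \<alpha> where "\<alpha> = pi * (real N - 1) / 4"
  define z1 where "z1 = cis (\<theta> - pi/2)"
  define z2 where "z2 = cis (\<theta> + pi/2)"
  have trm: "c_coef N x * sin (real (weight N x) * \<theta>) =
     Im (cis \<alpha> * z1 ^ weight N x + cis (-\<alpha>) * z2 ^ weight N x) / 2" for x
  proof -
    have c: "c_coef N x = cos (\<alpha> - real (weight N x) * (pi/2))"
      unfolding c_coef_def \<alpha>_def by (simp add: algebra_simps diff_divide_distrib)
    have "Im (cis \<alpha> * z1 ^ weight N x + cis (-\<alpha>) * z2 ^ weight N x)
       = sin (\<alpha> + real (weight N x) * (\<theta> - pi/2)) + sin (-\<alpha> + real (weight N x) * (\<theta> + pi/2))"
      unfolding z1_def z2_def Complex.DeMoivre cis_mult by simp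
    also have "\<dots> = sin (real (weight N x) * \<theta> + (\<alpha> - real (weight N x) * (pi/2)))
          + sin (real (weight N x) * \<theta> - (\<alpha> - real (weight N x) * (pi/2)))"
      by (simp add: algebra_simps)
    finally show ?thesis unfolding c cossin by simp
  qed
  have "(\<Sum>x\<in>bitstrings N. c_coef N x * sin (real (weight N x) * \<theta>))
      = Im (cis \<alpha> * (\<Sum>x\<in>bitstrings N. z1 ^ weight N x) + cis (-\<alpha>) * (\<Sum>x\<in>bitstrings N. z2 ^ weight N x)) / 2"
  proof -
    have "(\<Sum>x\<in>bitstrings N. c_coef N x * sin (real (weight N x) * \<theta>))
      = (\<Sum>x\<in>bitstrings N. Im (cis \<alpha> * z1 ^ weight N x + cis (-\<alpha>) * z2 ^ weight N x)) / 2"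
      unfolding trm by (simp add: sum_divide_distrib)
    also have "\<dots> = Im (\<Sum>x\<in>bitstrings N. cis \<alpha> * z1 ^ weight N x + cis (-\<alpha>) * z2 ^ weight N x) / 2"
      by (simp only: Im_sum)
    finally show ?thesis by (simp only: sum.distrib sum_distrib_left)
  qed
  also have "\<dots> = Im (cis \<alpha> * (1+z1)^N + cis (-\<alpha>) * (1+z2)^N) / 2"
    by (simp add: genfun)
  also have "\<dots> = ((2*cos (\<theta>/2 - pi/4))^N * sin (\<alpha> + N*(\<theta>/2-pi/4))
                  + (2*cos (\<theta>/2 + pi/4))^N * sin (-\<alpha> + N*(\<theta>/2+pi/4))) / 2"
  proof -
    have a: "(\<theta> - pi/2)/2 = \<theta>/2 - pi/4" "(\<theta> + pi/2)/2 = \<theta>/2 + pi/4" by simp_all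
    show ?thesis unfolding z1_def z2_def pw a by (simp only: imadd imcis)
  qed
  also have "\<dots> = 2^N * (cos (\<theta>/2 - pi/4) ^ N * sin (\<alpha> + N*(\<theta>/2-pi/4))
                  + cos (\<theta>/2 + pi/4) ^ N * sin (-\<alpha> + N*(\<theta>/2+pi/4))) / 2"
    by (simp add: power_mult_distrib algebra_simps)
  finally have S: "(\<Sum>x\<in>bitstrings N. c_coef N x * sin (real (weight N x) * \<theta>)) = \<dots>" .
  have e1: "\<alpha> + N*(\<theta>/2-pi/4) = N*\<theta>/2 - pi/4" unfolding \<alpha>_def by (simp add: field_simps)
  have e2: "-\<alpha> + N*(\<theta>/2+pi/4) = N*\<theta>/2 + pi/4" unfolding \<alpha>_def by (simp add: field_simps)
  have p: "2 powr ((1 - real N)/2) * 2^N / 2 = 2 powr ((real N - 1)/2)"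
  proof -
    have "2 powr ((1 - real N)/2) * 2^N / 2 = 2 powr ((1 - real N)/2 + real N - 1)"
      by (simp add: powr_realpow[symmetric] powr_add powr_diff)
    also have "(1 - real N)/2 + real N - 1 = (real N - 1)/2" by (simp add: field_simps)
    finally show ?thesis .
  qed
  have q: "2 powr ((1 - real N)/2) * (2^N * X / 2) = (2 powr ((1 - real N)/2) * 2^N / 2) * X" for X :: real
    by simp
  show ?thesis unfolding MABK_def S e1 e2 q p by (simp add: algebra_simps)
qed

lemma sin_npi_add: "sin (x + real n * pi) = (-1)^n * sin x"
  by (simp add: sin_add)

lemma MABK_cont: "continuous_on A (MABK N)"
  unfolding MABK_def by (intro continuous_intros)

lemma grid_neg:
  assumes "even N" "even k" "\<theta> = 2 * real k * pi / (real N + 1)" "0 \<le> \<theta>" "\<theta> \<le> 2*pi"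
  shows "MABK N \<theta> \<le> 0"
proof -
  obtain j where j: "k = 2*j" using assms(2) by auto
  define a where "a = cos (\<theta>/2 + pi/4)"
  define b where "b = cos (\<theta>/2 - pi/4)"
  have nt: "real N * \<theta> / 2 = real (2*j) * pi - \<theta>/2"
    using assms(3) j by (simp add: field_simps)
  have s1: "sin (real N * \<theta> / 2 + pi/4) = a"
  proof -
    have "real N * \<theta> / 2 + pi/4 = (pi/4 - \<theta>/2) + real (2*j) * pi" using nt by simp
    hence "sin (real N * \<theta> / 2 + pi/4) = sin (pi/4 - \<theta>/2)" by (simp only: sin_npi_add) simp
    also have "\<dots> = a" unfolding a_def sin_cos_eq by (simp add: algebra_simps)
    finally show ?thesis .
  qed
  have s2: "sin (real N * \<theta> / 2 - pi/4) = - b"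
  proof -
    have "real N * \<theta> / 2 - pi/4 = (- (\<theta>/2 + pi/4)) + real (2*j) * pi" using nt by simp
    hence "sin (real N * \<theta> / 2 - pi/4) = - sin (\<theta>/2 + pi/4)" by (simp only: sin_npi_add sin_minus) simp
    also have "sin (\<theta>/2 + pi/4) = cos (pi/4 - \<theta>/2)" unfolding sin_cos_eq by (simp add: algebra_simps)
    also have "cos (pi/4 - \<theta>/2) = b" unfolding b_def by (metis cos_minus minus_diff_eq)
    finally show ?thesis .
  qed
  have ba: "b - a = 2 * sin (\<theta>/2) * sin (pi/4)"
    unfolding a_def b_def by (simp add: cos_add cos_diff)
  have "0 \<le> sin (\<theta>/2)" using assms(4,5) by (intro sin_ge_zero) auto
  moreover have "0 < sin (pi/4)" by (simp add: sin_45)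
  ultimately have "a \<le> b" using ba by (metis diff_ge_0_iff_ge mult_nonneg_nonneg mult_2 less_imp_le add_nonneg_nonneg)
  hence "a ^ (N+1) \<le> b ^ (N+1)" using assms(1) by (intro power_mono_odd) auto
  thus ?thesis unfolding closed_form s1 s2 a_def[symmetric] b_def[symmetric]
    by (simp add: mult_nonpos_nonneg algebra_simps)
qed

lemma sq_a: "cos (\<theta>/2 + pi/4) ^ 2 = (1 - sin \<theta>) / 2"
proof -
  have "cos (2 * (\<theta>/2 + pi/4)) = 2 * cos (\<theta>/2 + pi/4) ^ 2 - 1" by (rule cos_double_cos)
  moreover have "cos (2 * (\<theta>/2 + pi/4)) = - sin \<theta>" by (simp add: algebra_simps cos_add)
  ultimately show ?thesis by simp
qed

lemma sq_b: "cos (\<theta>/2 - pi/4) ^ 2 = (1 + sin \<theta>) / 2"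
proof -
  have "cos (2 * (\<theta>/2 - pi/4)) = 2 * cos (\<theta>/2 - pi/4) ^ 2 - 1" by (rule cos_double_cos)
  moreover have "cos (2 * (\<theta>/2 - pi/4)) = sin \<theta>" by (simp add: algebra_simps cos_diff)
  ultimately show ?thesis by simp
qed

lemma pow32: "(2::real) powr (3/2) = 2 * sqrt 2"
proof -
  have "(2::real) powr (3/2) = 2 powr (1 + 1/2)" by simp
  also have "\<dots> = 2 * sqrt 2" by (simp only: powr_add powr_half_sqrt) simp
  finally show ?thesis .
qed

lemma val_2: "MABK 2 (pi/2) = 1"
proof -
  have "(2::real) powr (1/2) = sqrt 2" by (simp add: powr_half_sqrt)
  thus ?thesis unfolding closed_form by (simp add: sin_45)
qed

lemma s34: "sin (3*pi/4) = sqrt 2 / 2"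
proof -
  have "3*pi/4 = - (pi/4) + real 1 * pi" by simp
  thus ?thesis by (simp only: sin_npi_add sin_minus) (simp add: sin_45)
qed

lemma a4: "cos (\<theta>/2 + pi/4) ^ 4 = ((1 - sin \<theta>) / 2) ^ 2"
proof -
  have "cos (\<theta>/2 + pi/4) ^ 4 = (cos (\<theta>/2 + pi/4) ^ 2) ^ 2" by (simp flip: power_mult)
  thus ?thesis by (simp only: sq_a)
qed

lemma b4: "cos (\<theta>/2 - pi/4) ^ 4 = ((1 + sin \<theta>) / 2) ^ 2"
proof -
  have "cos (\<theta>/2 - pi/4) ^ 4 = (cos (\<theta>/2 - pi/4) ^ 2) ^ 2" by (simp flip: power_mult)
  thus ?thesis by (simp only: sq_b)
qed

lemma val_4a: "MABK 4 (pi/2) = 2"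
proof -
  have "real 4 * (pi/2) / 2 - pi/4 = 3*pi/4" by simp
  thus ?thesis unfolding closed_form by (simp add: pow32 s34)
qed

lemma val_4b: "MABK 4 (pi/4) = 3/2"
proof -
  have e1: "real 4 * (pi/4) / 2 + pi/4 = 3*pi/4" by simp
  have e2: "real 4 * (pi/4) / 2 - pi/4 = pi/4" by simp
  have "MABK 4 (pi/4) = 2 * sqrt 2 * (((1 - sqrt 2 / 2)/2)^2 * (sqrt 2 / 2) + ((1 + sqrt 2 / 2)/2)^2 * (sqrt 2 / 2))"
    unfolding closed_form e1 e2 a4 b4 s34 by (simp add: pow32 sin_45)
  also have "\<dots> = 3/2" by (simp add: power2_eq_square algebra_simps) (simp add: field_simps)
  finally show ?thesis .
qed


lemma s54: "sin (5*pi/4) = - (sqrt 2 / 2)"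
proof -
  have "5*pi/4 = pi/4 + real 1 * pi" by simp
  thus ?thesis by (simp only: sin_npi_add) (simp add: sin_45)
qed

lemma s74: "sin (7*pi/4) = - (sqrt 2 / 2)"
proof -
  have "7*pi/4 = - (pi/4) + real 2 * pi" by simp
  thus ?thesis by (simp only: sin_npi_add sin_minus) (simp add: sin_45)
qed

lemma val_4c: "MABK 4 (3*pi/4) = - 3/2"
proof -
  have e1: "real 4 * (3*pi/4) / 2 + pi/4 = 7*pi/4" by simp
  have e2: "real 4 * (3*pi/4) / 2 - pi/4 = 5*pi/4" by simp
  have "MABK 4 (3*pi/4) = 2 * sqrt 2 * (((1 - sqrt 2 / 2)/2)^2 * (- (sqrt 2 / 2)) + ((1 + sqrt 2 / 2)/2)^2 * (- (sqrt 2 / 2)))"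
    unfolding closed_form e1 e2 a4 b4 s34 s54 s74 by (simp add: pow32)
  also have "\<dots> = - 3/2" by (simp add: power2_eq_square algebra_simps) (simp add: field_simps)
  finally show ?thesis .
qed

lemma val_6: "MABK 6 (5*pi/4) \<le> 0"
proof -
  have e1: "real 6 * (5*pi/4) / 2 + pi/4 = 0 + real 4 * pi" by simp
  have e2: "real 6 * (5*pi/4) / 2 - pi/4 = pi/2 + real 3 * pi" by simp
  have "sin (real 6 * (5*pi/4) / 2 + pi/4) = 0" unfolding e1 sin_npi_add by simp
  moreover have "sin (real 6 * (5*pi/4) / 2 - pi/4) = -1" unfolding e2 sin_npi_add by simp
  ultimately show ?thesis unfolding closed_form
    by (simp add: mult_nonneg_nonpos zero_le_even_power)
qed

lemma a8: "cos (\<theta>/2 + pi/4) ^ 8 = ((1 - sin \<theta>) / 2) ^ 4"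
proof -
  have "cos (\<theta>/2 + pi/4) ^ 8 = (cos (\<theta>/2 + pi/4) ^ 2) ^ 4" by (simp flip: power_mult)
  thus ?thesis by (simp only: sq_a)
qed

lemma b8: "cos (\<theta>/2 - pi/4) ^ 8 = ((1 + sin \<theta>) / 2) ^ 4"
proof -
  have "cos (\<theta>/2 - pi/4) ^ 8 = (cos (\<theta>/2 - pi/4) ^ 2) ^ 4" by (simp flip: power_mult)
  thus ?thesis by (simp only: sq_b)
qed

lemma val_8: "MABK 8 (7*pi/4) \<le> 0"
proof -
  have e1: "real 8 * (7*pi/4) / 2 + pi/4 = pi/4 + real 7 * pi" by simp
  have e2: "real 8 * (7*pi/4) / 2 - pi/4 = -(pi/4) + real 7 * pi" by simp
  have S1: "sin (real 8 * (7*pi/4) / 2 + pi/4) = - (sqrt 2 / 2)" unfolding e1 sin_npi_add by (simp add: sin_45)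
  have S2: "sin (real 8 * (7*pi/4) / 2 - pi/4) = sqrt 2 / 2" unfolding e2 sin_npi_add by (simp add: sin_45)
  have le: "((1 + - (sqrt 2 / 2)) / 2) ^ 4 \<le> ((1 - - (sqrt 2 / 2)) / 2) ^ 4"
  proof (rule power_mono)
    have "sqrt 2 \<le> sqrt 4" by (rule real_sqrt_le_mono) simp
    hence "sqrt 2 / 2 \<le> 1" by simp
    thus "0 \<le> (1 + - (sqrt 2 / 2)) / 2" by simp
  qed simp
  have "MABK 8 (7*pi/4) = 2 powr ((real 8 - 1)/2) * (sqrt 2 / 2) *
     (((1 + - (sqrt 2 / 2)) / 2) ^ 4 - ((1 - - (sqrt 2 / 2)) / 2) ^ 4)"
    unfolding closed_form S1 S2 a8 b8 s74 by (simp add: algebra_simps)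
  also have "\<dots> \<le> 0" using le by (intro mult_nonneg_nonpos) auto
  finally show ?thesis .
qed

lemma ivt_M:
  assumes "a \<le> b" "(MABK N a \<le> s \<and> s \<le> MABK N b) \<or> (MABK N b \<le> s \<and> s \<le> MABK N a)"
  shows "\<exists>x. a \<le> x \<and> x \<le> b \<and> MABK N x = s"
  using assms IVT'[of "MABK N" a s b] IVT2'[of "MABK N" b s a] MABK_cont by blast


lemma go_up:
  assumes "a \<le> b" "MABK N a < s" "s \<le> MABK N b" "\<And>x. a < x \<Longrightarrow> x \<le> b \<Longrightarrow> x \<in> G_set"
  shows "\<exists>\<theta>\<in>G_set. MABK N \<theta> = s"
proof -
  obtain x where x: "a \<le> x" "x \<le> b" "MABK N x = s" using ivt_M[of a b N s] assms(1-3) by auto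
  have "x \<noteq> a" using x(3) assms(2) by auto
  thus ?thesis using x assms(4) by force
qed

lemma go_down:
  assumes "a \<le> b" "MABK N b < s" "s \<le> MABK N a" "\<And>x. a \<le> x \<Longrightarrow> x < b \<Longrightarrow> x \<in> G_set"
  shows "\<exists>\<theta>\<in>G_set. MABK N \<theta> = s"
proof -
  obtain x where x: "a \<le> x" "x \<le> b" "MABK N x = s" using ivt_M[of a b N s] assms(1-3) by auto
  have "x \<noteq> b" using x(3) assms(2) by auto
  thus ?thesis using x assms(4) by force
qed

lemma piq_less [simp]: "pi * x < pi * y \<longleftrightarrow> x < y"
  by simp
lemma piq_le [simp]: "pi * x \<le> pi * y \<longleftrightarrow> x \<le> y"
  by simp

lemma G1: "pi/4 < x \<Longrightarrow> x < pi/2 \<Longrightarrow> x \<in> G_set" unfolding G_set_def by auto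
lemma G2: "pi/2 < x \<Longrightarrow> x < 3*pi/4 \<Longrightarrow> x \<in> G_set" unfolding G_set_def by auto
lemma G3: "5*pi/4 < x \<Longrightarrow> x < 3*pi/2 \<Longrightarrow> x \<in> G_set" unfolding G_set_def by auto
lemma G4: "3*pi/2 < x \<Longrightarrow> x < 7*pi/4 \<Longrightarrow> x \<in> G_set" unfolding G_set_def by auto

lemma case2:
  assumes h: "N mod 8 = 2" and "even N" "1 < s" and ms: "s \<le> MABK N (theta_star N)"
  shows "\<exists>\<theta>\<in>G_set. MABK N \<theta> = s"
proof -
    have "\<exists>m. N = 8*m+2" using h by presburger
    then obtain m where N: "N = 8*m+2" by blast
    have RN: "real N = 8 * real m + 2" using N by simp
    have tN: "t_N N = real N/4 + 1/2" using h by (simp add: t_N_def)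
    have ts: "theta_star N = pi * (2*(2*real m+1)/(8*real m+3))"
      unfolding theta_star_def tN RN by (simp add: field_simps)
    show ?thesis
    proof (cases "m = 0")
      case True
      show ?thesis
      proof (rule go_up[of "pi/2" "theta_star N"])
        show "pi/2 \<le> theta_star N" unfolding ts True by simp
        have "N = 2" using N True by simp
        thus "MABK N (pi/2) < s" using assms(3) val_2 by simp
        show "s \<le> MABK N (theta_star N)" by (rule ms)
        fix x assume "pi/2 < x" "x \<le> theta_star N"
        moreover have "theta_star N < 3*pi/4" unfolding ts True by simp
        ultimately show "x \<in> G_set" by (intro G2) auto
      qed
    next
      case False
      define lo where "lo = pi * (2*(2*real m+2)/(8*real m+3))"
      have "MABK N lo \<le> 0"
      proof (rule grid_neg[where k = "2*m+2"])
        show "even N" "even (2*m+2)" by (simp_all add: assms(2))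
        show "lo = 2 * real (2*m+2) * pi / (real N + 1)" unfolding lo_def RN by (simp add: field_simps)
        show "0 \<le> lo" unfolding lo_def by simp
        show "lo \<le> 2*pi" unfolding lo_def by (simp add: field_simps)
      qed
      show ?thesis
      proof (rule go_down[of "theta_star N" lo])
        show "theta_star N \<le> lo" unfolding ts lo_def by (simp add: divide_right_mono)
        show "MABK N lo < s" using \<open>MABK N lo \<le> 0\<close> assms(3) by simp
        show "s \<le> MABK N (theta_star N)" by (rule ms)
        fix x assume x: "theta_star N \<le> x" "x < lo"
        have "pi/2 < theta_star N" unfolding ts by (simp add: field_simps)
        moreover have "lo \<le> 3*pi/4" using False unfolding lo_def by (simp add: field_simps)
        ultimately show "x \<in> G_set" using x by (intro G2) auto
      qed
    qed
qed

lemma case4: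
  assumes h: "N mod 8 = 4" and "even N" "1 < s" and ms: "s \<le> MABK N (theta_star N)"
  shows "\<exists>\<theta>\<in>G_set. MABK N \<theta> = s"
proof -
    have "\<exists>m. N = 8*m+4" using h by presburger
    then obtain m where N: "N = 8*m+4" by blast
    have RN: "real N = 8 * real m + 4" using N by simp
    have tN: "t_N N = real N/4" using h by (simp add: t_N_def)
    have ts: "theta_star N = pi * (2*(2*real m+1)/(8*real m+5))"
      unfolding theta_star_def tN RN by (simp add: field_simps)
    show ?thesis
    proof (cases "m = 0")
      case True
      hence N4: "N = 4" using N by simp
      show ?thesis
      proof (cases "3/2 < s")
        case True
        show ?thesis
        proof (rule go_up[of "pi/4" "theta_star N"])
          show "pi/4 \<le> theta_star N" unfolding ts \<open>m=0\<close> by simp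
          show "MABK N (pi/4) < s" using True val_4b N4 by simp
          show "s \<le> MABK N (theta_star N)" by (rule ms)
          fix x assume "pi/4 < x" "x \<le> theta_star N"
          moreover have "theta_star N < pi/2" unfolding ts \<open>m=0\<close> by simp
          ultimately show "x \<in> G_set" by (intro G1) auto
        qed
      next
        case False
        obtain x where x: "pi/2 \<le> x" "x \<le> 3*pi/4" "MABK N x = s"
          using ivt_M[of "pi/2" "3*pi/4" N s] val_4a val_4c N4 False assms(3) by auto
        have "x \<noteq> pi/2"
        proof
          assume "x = pi/2"
          hence "s = MABK 4 (pi/2)" using x(3) N4 by metis
          hence "s = 2" using val_4a by simp
          thus False using False by simp
        qed
        moreover have "x \<noteq> 3*pi/4"
        proof
          assume "x = 3*pi/4"
          hence "s = MABK 4 (3*pi/4)" using x(3) N4 by metis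
          hence "s = - 3/2" using val_4c by simp
          thus False using assms(3) by simp
        qed
        ultimately have "x \<in> G_set" using x by (intro G2) auto
        thus ?thesis using x(3) by blast
      qed
    next
      case False
      define lo where "lo = pi * (2*(2*real m)/(8*real m+5))"
      have "MABK N lo \<le> 0"
      proof (rule grid_neg[where k = "2*m"])
        show "even N" "even (2*m)" by (simp_all add: assms(2))
        show "lo = 2 * real (2*m) * pi / (real N + 1)" unfolding lo_def RN by (simp add: field_simps)
        show "0 \<le> lo" unfolding lo_def by simp
        show "lo \<le> 2*pi" unfolding lo_def by (simp add: field_simps)
      qed
      show ?thesis
      proof (rule go_up[of lo "theta_star N"])
        show "lo \<le> theta_star N" unfolding ts lo_def by (simp add: divide_right_mono)
        show "MABK N lo < s" using \<open>MABK N lo \<le> 0\<close> assms(3) by simp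
        show "s \<le> MABK N (theta_star N)" by (rule ms)
        fix x assume x: "lo < x" "x \<le> theta_star N"
        have "theta_star N < pi/2" unfolding ts by (simp add: field_simps)
        moreover have "pi/4 \<le> lo" using False unfolding lo_def by (simp add: field_simps)
        ultimately show "x \<in> G_set" using x by (intro G1) auto
      qed
    qed
qed

lemma case6:
  assumes h: "N mod 8 = 6" and "even N" "1 < s" and ms: "s \<le> MABK N (theta_star N)"
  shows "\<exists>\<theta>\<in>G_set. MABK N \<theta> = s"
proof -
    have "\<exists>m. N = 8*m+6" using h by presburger
    then obtain m where N: "N = 8*m+6" by blast
    have RN: "real N = 8 * real m + 6" using N by simp
    have tN: "t_N N = 3 * real N/4 + 1/2" using h by (simp add: t_N_def)
    have ts: "theta_star N = pi * (2*(6*real m+5)/(8*real m+7))"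
      unfolding theta_star_def tN RN by (simp add: field_simps)
    show ?thesis
    proof (cases "m = 0")
      case True
      hence N6: "N = 6" using N by simp
      show ?thesis
      proof (rule go_up[of "5*pi/4" "theta_star N"])
        show "5*pi/4 \<le> theta_star N" unfolding ts True by simp
        show "MABK N (5*pi/4) < s" using assms(3) val_6 N6 by simp
        show "s \<le> MABK N (theta_star N)" by (rule ms)
        fix x assume "5*pi/4 < x" "x \<le> theta_star N"
        moreover have "theta_star N < 3*pi/2" unfolding ts True by simp
        ultimately show "x \<in> G_set" by (intro G3) auto
      qed
    next
      case False
      define lo where "lo = pi * (2*(6*real m+4)/(8*real m+7))"
      have "MABK N lo \<le> 0"
      proof (rule grid_neg[where k = "6*m+4"])
        show "even N" "even (6*m+4)" by (simp_all add: assms(2))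
        show "lo = 2 * real (6*m+4) * pi / (real N + 1)" unfolding lo_def RN by (simp add: field_simps)
        show "0 \<le> lo" unfolding lo_def by simp
        show "lo \<le> 2*pi" unfolding lo_def by (simp add: field_simps)
      qed
      show ?thesis
      proof (rule go_up[of lo "theta_star N"])
        show "lo \<le> theta_star N" unfolding ts lo_def by (simp add: divide_right_mono)
        show "MABK N lo < s" using \<open>MABK N lo \<le> 0\<close> assms(3) by simp
        show "s \<le> MABK N (theta_star N)" by (rule ms)
        fix x assume x: "lo < x" "x \<le> theta_star N"
        have "theta_star N < 3*pi/2" unfolding ts by (simp add: field_simps)
        moreover have "5*pi/4 \<le> lo" using False unfolding lo_def by (simp add: field_simps)
        ultimately show "x \<in> G_set" using x by (intro G3) auto
      qed
    qed
qed

lemma case0: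
  assumes h: "N mod 8 = 0" "N \<ge> 2" and "even N" "1 < s" and ms: "s \<le> MABK N (theta_star N)"
  shows "\<exists>\<theta>\<in>G_set. MABK N \<theta> = s"
proof -
    have "\<exists>m. N = 8*m+8" using h by presburger
    then obtain m where N: "N = 8*m+8" by blast
    have RN: "real N = 8 * real m + 8" using N by simp
    have tN: "t_N N = 3 * real N/4 + 1" using h by (simp add: t_N_def)
    have ts: "theta_star N = pi * (2*(6*real m+7)/(8*real m+9))"
      unfolding theta_star_def tN RN by (simp add: field_simps)
    show ?thesis
    proof (cases "m = 0")
      case True
      hence N8: "N = 8" using N by simp
      show ?thesis
      proof (rule go_down[of "theta_star N" "7*pi/4"])
        show "theta_star N \<le> 7*pi/4" unfolding ts True by simp
        show "MABK N (7*pi/4) < s" using assms(4) val_8 N8 by simp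
        show "s \<le> MABK N (theta_star N)" by (rule ms)
        fix x assume "theta_star N \<le> x" "x < 7*pi/4"
        moreover have "3*pi/2 < theta_star N" unfolding ts True by simp
        ultimately show "x \<in> G_set" by (intro G4) auto
      qed
    next
      case False
      define lo where "lo = pi * (2*(6*real m+8)/(8*real m+9))"
      have "MABK N lo \<le> 0"
      proof (rule grid_neg[where k = "6*m+8"])
        show "even N" "even (6*m+8)" by (simp_all add: assms(3))
        show "lo = 2 * real (6*m+8) * pi / (real N + 1)" unfolding lo_def RN by (simp add: field_simps)
        show "0 \<le> lo" unfolding lo_def by simp
        show "lo \<le> 2*pi" unfolding lo_def by (simp add: field_simps)
      qed
      show ?thesis
      proof (rule go_down[of "theta_star N" lo])
        show "theta_star N \<le> lo" unfolding ts lo_def by (simp add: divide_right_mono)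
        show "MABK N lo < s" using \<open>MABK N lo \<le> 0\<close> assms(4) by simp
        show "s \<le> MABK N (theta_star N)" by (rule ms)
        fix x assume x: "theta_star N \<le> x" "x < lo"
        have "3*pi/2 < theta_star N" unfolding ts by (simp add: field_simps)
        moreover have "lo \<le> 7*pi/4" using False unfolding lo_def by (simp add: field_simps)
        ultimately show "x \<in> G_set" using x by (intro G4) auto
      qed
    qed
qed

theorem proposition4:
  fixes N :: nat and s :: real
  assumes "N \<ge> 2" and "even N"
    and "1 < s" and "s \<le> m_star N"
  shows "\<exists>\<theta>\<in>G_set. MABK N \<theta> = s"
proof -
  have ms: "s \<le> MABK N (theta_star N)" using assms(4) unfolding m_star_def .
  have "N mod 8 = 0 \<or> N mod 8 = 2 \<or> N mod 8 = 4 \<or> N mod 8 = 6" using assms(2) by presburger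
  thus ?thesis using case2[OF _ assms(2,3) ms] case4[OF _ assms(2,3) ms]
      case6[OF _ assms(2,3) ms] case0[OF _ assms(1,2,3) ms] by (elim disjE) auto
qed

end
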